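(* Let $p$ be a prime number and $\Gamma$ a group. If $\Gamma$ is Jordan (respectively, nilpotently Jordan of class at most $c$), then $\Gamma$ is $p$-Jordan (respectively, nilpotently $p$-Jordan of class at most $c$).
   Context: A group $\Gamma$ is Jordan if there is a constant $J(\Gamma)$ such that every finite subgroup of $\Gamma$ contains a normal abelian subgroup of index at most $J(\Gamma)$; it is nilpotently Jordan of class at most $c$ if there is $J(\Gamma)$ such that every finite subgroup contains a normal subgroup of index at most $J(\Gamma)$ that is nilpotent of class at most $c$. For a prime $p$, $\Gamma$ is $p$-Jordan (respectively, nilpotently $p$-Jordan of class at most $c$) if there exist constants $J(\Gamma)$, $e(\Gamma)$ such that every finite subgroup $G$ of $\Gamma$ contains a normal subgroup $N$ of order coprime to $p$ and index at most $J(\Gamma)\cdot|G_p|^{e(\Gamma)}$ with $N$ abelian (respectively, nilpotent of class at most $c$), where $G_p$ is a $p$-Sylow subgroup of $G$. *)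

theory Defs
  imports "HOL-Algebra.Algebra" "HOL-Computational_Algebra.Primes"
begin

definition comm_subgroup :: "('a, 'b) monoid_scheme \<Rightarrow> 'a set \<Rightarrow> 'a set \<Rightarrow> 'a set" where
  "comm_subgroup G A B =
     generate G {x \<otimes>\<^bsub>G\<^esub> y \<otimes>\<^bsub>G\<^esub> inv\<^bsub>G\<^esub> x \<otimes>\<^bsub>G\<^esub> inv\<^bsub>G\<^esub> y | x y. x \<in> A \<and> y \<in> B}"

text \<open>Lower central series of a subgroup N: index 0 is N = gamma_1,
  index (Suc i) is [gamma_(i+1), N] = gamma_(i+2).\<close>
fun lower_central :: "('a, 'b) monoid_scheme \<Rightarrow> 'a set \<Rightarrow> nat \<Rightarrow> 'a set" where
  "lower_central G N 0 = N"
| "lower_central G N (Suc i) = comm_subgroup G (lower_central G N i) N"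

definition nilpotent_class_le :: "('a, 'b) monoid_scheme \<Rightarrow> 'a set \<Rightarrow> nat \<Rightarrow> bool" where
  "nilpotent_class_le G N c \<longleftrightarrow> lower_central G N c = {\<one>\<^bsub>G\<^esub>}"

definition abelian_set :: "('a, 'b) monoid_scheme \<Rightarrow> 'a set \<Rightarrow> bool" where
  "abelian_set G N \<longleftrightarrow> (\<forall>x\<in>N. \<forall>y\<in>N. x \<otimes>\<^bsub>G\<^esub> y = y \<otimes>\<^bsub>G\<^esub> x)"

definition sylow_order :: "nat \<Rightarrow> nat \<Rightarrow> nat" where
  "sylow_order p n = p ^ multiplicity p n"

definition jordan :: "('a, 'b) monoid_scheme \<Rightarrow> bool" where
  "jordan G \<longleftrightarrow> (\<exists>J::nat. \<forall>H. subgroup H G \<and> finite H \<longrightarrow>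
      (\<exists>N. N \<lhd> G\<lparr>carrier := H\<rparr> \<and> abelian_set G N \<and> card H \<le> J * card N))"

definition nil_jordan :: "('a, 'b) monoid_scheme \<Rightarrow> nat \<Rightarrow> bool" where
  "nil_jordan G c \<longleftrightarrow> (\<exists>J::nat. \<forall>H. subgroup H G \<and> finite H \<longrightarrow>
      (\<exists>N. N \<lhd> G\<lparr>carrier := H\<rparr> \<and> nilpotent_class_le G N c \<and> card H \<le> J * card N))"

definition p_jordan :: "('a, 'b) monoid_scheme \<Rightarrow> nat \<Rightarrow> bool" where
  "p_jordan G p \<longleftrightarrow> (\<exists>(J::nat) (e::nat). \<forall>H. subgroup H G \<and> finite H \<longrightarrow>
      (\<exists>N. N \<lhd> G\<lparr>carrier := H\<rparr> \<and> coprime (card N) p \<and> abelian_set G N \<and>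
           card H \<le> J * sylow_order p (card H) ^ e * card N))"

definition nil_p_jordan :: "('a, 'b) monoid_scheme \<Rightarrow> nat \<Rightarrow> nat \<Rightarrow> bool" where
  "nil_p_jordan G p c \<longleftrightarrow> (\<exists>(J::nat) (e::nat). \<forall>H. subgroup H G \<and> finite H \<longrightarrow>
      (\<exists>N. N \<lhd> G\<lparr>carrier := H\<rparr> \<and> coprime (card N) p \<and> nilpotent_class_le G N c \<and>
           card H \<le> J * sylow_order p (card H) ^ e * card N))"

end

theory Submission
  imports Defs
begin

lemma num1:
  fixes q n d :: nat
  assumes "Factorial_Ring.prime q" "n > 0" "d dvd n" "q ^ multiplicity q n dvd d"
  shows "coprime (q ^ multiplicity q n) (d div q ^ multiplicity q n)"
  by (metis (no_types, lifting) assms(1,2,3,4) coprime_power_left_iff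
    dvd_0_left_iff dvd_multiplicity_eq is_unit_left_imp_coprime le_antisym
    multiplicity_decompose multiplicity_eq_zero_iff multiplicity_geI
    multiplicity_gt_zero_iff not_is_unit_0 prime_imp_coprime)

lemma numPS:
  fixes q n d :: nat
  assumes q: "Factorial_Ring.prime q" and qd: "q dvd d" and dn: "d dvd n" and n: "n > 0" and cop: "coprime d (n div d)"
  defines "a \<equiv> multiplicity q n"
  shows "q ^ a dvd d" "d div q ^ a < d" "d div q ^ a dvd n"
    "coprime (d div q ^ a) (n div (d div q ^ a))" "coprime (d div q ^ a) (q ^ a)"
    "d = d div q ^ a * q ^ a"
proof -
  define e where "e = n div d"
  have ne: "n = d * e" using dn e_def by simp
  have d0: "d \<noteq> 0" "e \<noteq> 0" using ne n by auto
  have "\<not> q dvd e" using cop qd q unfolding e_def[symmetric]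
    by (metis coprime_common_divisor not_prime_unit)
  then have me: "multiplicity q e = 0" by (rule not_dvd_imp_multiplicity_0)
  have ad: "a = multiplicity q d" unfolding a_def ne
    using prime_elem_multiplicity_mult_distrib[of q d e] q d0 me by simp
  show 1: "q ^ a dvd d" unfolding ad by (rule multiplicity_dvd)
  have "a > 0" unfolding ad using qd d0 q
    by (simp add: prime_multiplicity_gt_zero_iff)
  then have qa: "q ^ a > 1" using q prime_gt_1_nat one_less_power by blast
  show 6: "d = d div q ^ a * q ^ a" using 1 by simp
  show "d div q ^ a < d" using qa d0 by simp
  show "d div q ^ a dvd n" using 1 dn by (metis dvd_div_mult_self dvd_mult_left)
  have nq: "\<not> q dvd (d div q ^ a)" unfolding ad using d0 q by (intro multiplicity_decompose) auto
  show c1: "coprime (d div q ^ a) (q ^ a)"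
    using nq q by (simp add: coprime_commute prime_imp_coprime)
  have nn: "n = (d div q ^ a) * (q ^ a * e)" using ne 6 by (metis mult.assoc)
  have "d div q ^ a \<noteq> 0" using 6 d0 by (metis mult_zero_left)
  then have "n div (d div q ^ a) = q ^ a * e" using nn by simp
  moreover have "coprime (d div q ^ a) e" using cop unfolding e_def[symmetric]
    by (metis 6 coprime_mult_left_iff)
  ultimately show "coprime (d div q ^ a) (n div (d div q ^ a))" using c1 by simp
qed

context group begin

definition conjc :: "'a set \<Rightarrow> 'a set \<Rightarrow> bool" where
  "conjc A B \<longleftrightarrow> (\<forall>g\<in>A. \<forall>x\<in>B. g \<otimes> x \<otimes> inv g \<in> B)"

lemma GL:
  assumes N: "subgroup N G" and fin: "finite N" and T: "subgroup T G" "T \<subseteq> N"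
    and cc: "conjc N T" and x: "x \<in> N" and xk: "x [^] (k::nat) = \<one>"
    and cop: "coprime k (card N div card T)"
  shows "x \<in> T"
proof -
  interpret NN: group "G\<lparr>carrier := N\<rparr>" using N by (rule subgroup.subgroup_is_group) (rule is_group)
  have TN: "subgroup T (G\<lparr>carrier := N\<rparr>)" using subgroup_incl[OF T(1) N T(2)] .
  have nT: "T \<lhd> G\<lparr>carrier := N\<rparr>"
    using cc TN unfolding conjc_def
    by (subst NN.normal_inv_iff) (auto simp: m_inv_consistent[OF N])
  interpret nT: normal T "G\<lparr>carrier := N\<rparr>" by (rule nT)
  interpret Q: group "G\<lparr>carrier := N\<rparr> Mod T" by (rule nT.factorgroup_is_group)
  let ?c = "T #>\<^bsub>G\<lparr>carrier := N\<rparr>\<^esub> x"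
  have cQ: "?c \<in> carrier (G\<lparr>carrier := N\<rparr> Mod T)"
    using x unfolding FactGroup_def RCOSETS_def by auto
  have "?c [^]\<^bsub>G\<lparr>carrier := N\<rparr> Mod T\<^esub> k = T #>\<^bsub>G\<lparr>carrier := N\<rparr>\<^esub> (x [^]\<^bsub>G\<lparr>carrier := N\<rparr>\<^esub> k)"
    using nT.FactGroup_pow x by simp
  also have "\<dots> = T #>\<^bsub>G\<lparr>carrier := N\<rparr>\<^esub> \<one>\<^bsub>G\<lparr>carrier := N\<rparr>\<^esub>"
    using xk by (simp add: nat_pow_consistent[symmetric])
  also have "\<dots> = T" using NN.coset_mult_one[of T] T(2) by simp
  finally have "?c [^]\<^bsub>G\<lparr>carrier := N\<rparr> Mod T\<^esub> k = \<one>\<^bsub>G\<lparr>carrier := N\<rparr> Mod T\<^esub>" by simp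
  hence d1: "Q.ord ?c dvd k" using Q.pow_eq_id[OF cQ] by simp
  have finQ: "finite (carrier (G\<lparr>carrier := N\<rparr> Mod T))"
    using fin unfolding FactGroup_def RCOSETS_def by auto
  have d2: "Q.ord ?c dvd order (G\<lparr>carrier := N\<rparr> Mod T)"
    using Q.ord_dvd_group_order[OF cQ] .
  have "card (rcosets\<^bsub>G\<lparr>carrier := N\<rparr>\<^esub> T) * card T = card N"
    using NN.lagrange[OF TN] by (simp add: order_def)
  moreover have "card T > 0" using fin T(2) finite_subset subgroup.one_closed[OF T(1)] 
    by (metis card_gt_0_iff empty_iff)
  ultimately have "order (G\<lparr>carrier := N\<rparr> Mod T) = card N div card T"
    by (simp add: order_def FactGroup_def) (metis nonzero_mult_div_cancel_right less_not_refl2)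
  with d1 d2 cop have "Q.ord ?c = 1"
    by (metis coprime_common_divisor_nat nat_dvd_1_iff_1)
  hence "?c = T" using Q.ord_eq_1[OF cQ] by simp
  moreover have "x \<in> ?c" using NN.rcos_self[OF _ TN] x by simp
  ultimately show ?thesis by simp
qed

lemma lc_sub:
  assumes N: "subgroup N G"
  shows "lower_central G N i \<subseteq> N"
proof (induction i)
  case 0 then show ?case by simp
next
  case (Suc i)
  have "{x \<otimes> y \<otimes> inv x \<otimes> inv y | x y. x \<in> lower_central G N i \<and> y \<in> N} \<subseteq> N"
    using Suc N by (auto intro!: subgroup.m_closed[OF N] subgroup.m_inv_closed[OF N])
  then show ?case unfolding lower_central.simps comm_subgroup_def
    by (rule generate_subgroup_incl[OF _ N])
qed

lemma NG:
  assumes N: "subgroup N G" and nil: "lower_central G N c = {\<one>}"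
    and L: "subgroup L G" "L \<subseteq> N" "L \<noteq> N"
  shows "\<exists>z\<in>N. z \<notin> L \<and> (\<forall>l\<in>L. z \<otimes> l \<otimes> inv z \<in> L)"
proof (rule ccontr)
  assume H: "\<not> ?thesis"
  have step: "lower_central G N j \<subseteq> L" if "lower_central G N (Suc j) \<subseteq> L" for j
  proof
    fix z assume z: "z \<in> lower_central G N j"
    have zN: "z \<in> N" using z lc_sub[OF N] by blast
    have "z \<otimes> l \<otimes> inv z \<in> L" if l: "l \<in> L" for l
    proof -
      have lN: "l \<in> N" using l L(2) by blast
      have c: "z \<otimes> l \<otimes> inv z \<otimes> inv l \<in> L"
        using that z lN generate.incl[of "z \<otimes> l \<otimes> inv z \<otimes> inv l"
          "{x \<otimes> y \<otimes> inv x \<otimes> inv y | x y. x \<in> lower_central G N j \<and> y \<in> N}" G]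
          \<open>lower_central G N (Suc j) \<subseteq> L\<close>
        unfolding lower_central.simps comm_subgroup_def by blast
      have zc: "z \<in> carrier G" "l \<in> carrier G" using zN lN N subgroup.subset by blast+
      have "z \<otimes> l \<otimes> inv z = (z \<otimes> l \<otimes> inv z \<otimes> inv l) \<otimes> l"
        using zc by (simp add: m_assoc)
      then show ?thesis using c l subgroup.m_closed[OF L(1)] by metis
    qed
    then show "z \<in> L" using H zN by blast
  qed
  have "\<forall>i. i \<le> c \<longrightarrow> lower_central G N (c - i) \<subseteq> L"
  proof (intro allI impI)
    fix i assume "i \<le> c" then show "lower_central G N (c - i) \<subseteq> L"
    proof (induction i)
      case 0 then show ?case using nil subgroup.one_closed[OF L(1)] by simp
    next
      case (Suc i)
      then have "lower_central G N (Suc (c - Suc i)) \<subseteq> L" by (simp add: Suc_diff_Suc)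
      then show ?case by (rule step)
    qed
  qed
  then have "N \<subseteq> L" by (metis diff_self_eq_0 le_refl lower_central.simps(1))
  then show False using L by blast
qed

lemma card_dvd_sub:
  assumes A: "subgroup A G" and B: "subgroup B G" "A \<subseteq> B" and fin: "finite B"
  shows "card A dvd card B"
proof -
  interpret BB: group "G\<lparr>carrier := B\<rparr>" using B(1) by (rule subgroup.subgroup_is_group) (rule is_group)
  have "card (rcosets\<^bsub>G\<lparr>carrier := B\<rparr>\<^esub> A) * card A = card B"
    using BB.lagrange[OF subgroup_incl[OF A B]] by (simp add: order_def)
  then show ?thesis by (metis dvd_triv_right)
qed

lemma pow_card_sub:
  assumes A: "subgroup A G" and fin: "finite A" and x: "x \<in> A"
  shows "x [^] card A = \<one>"
proof -
  interpret AA: group "G\<lparr>carrier := A\<rparr>" using A by (rule subgroup.subgroup_is_group) (rule is_group)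
  have "x [^]\<^bsub>G\<lparr>carrier := A\<rparr>\<^esub> order (G\<lparr>carrier := A\<rparr>) = \<one>\<^bsub>G\<lparr>carrier := A\<rparr>\<^esub>"
    using AA.pow_order_eq_1 x by simp
  then show ?thesis by (simp add: order_def nat_pow_consistent[symmetric])
qed

lemma conj_pow:
  assumes "g \<in> carrier G" "y \<in> carrier G"
  shows "(g \<otimes> y \<otimes> inv g) [^] (n::nat) = g \<otimes> y [^] n \<otimes> inv g"
proof (induction n)
  case 0 then show ?case using assms by simp
next
  case (Suc n)
  have "(g \<otimes> y \<otimes> inv g) [^] Suc n = (g \<otimes> y [^] n \<otimes> inv g) \<otimes> (g \<otimes> y \<otimes> inv g)"
    using Suc by simp
  also have "\<dots> = g \<otimes> (y [^] n \<otimes> y) \<otimes> inv g" using assms by (simp add: m_assoc) (simp add: m_assoc[symmetric])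
  finally show ?case by simp
qed

lemma conj_comp:
  assumes "g \<in> carrier G" "h \<in> carrier G" "y \<in> carrier G"
  shows "(g \<otimes> h) \<otimes> y \<otimes> inv (g \<otimes> h) = g \<otimes> (h \<otimes> y \<otimes> inv h) \<otimes> inv g"
  using assms by (simp add: m_assoc inv_mult_group)

lemma conj_inv_cancel:
  assumes "g \<in> carrier G" "y \<in> carrier G"
  shows "inv g \<otimes> (g \<otimes> y \<otimes> inv g) \<otimes> inv (inv g) = y"
  using assms by (simp add: m_assoc inv_mult_group) (simp add: m_assoc[symmetric])

lemma conj_inv_cancel2:
  assumes "g \<in> carrier G" "y \<in> carrier G"
  shows "g \<otimes> (inv g \<otimes> y \<otimes> inv (inv g)) \<otimes> inv g = y"
  using assms by (simp add: m_assoc inv_mult_group) (simp add: m_assoc[symmetric])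

lemma SN:
  assumes N: "subgroup N G" and fin: "finite N" and nil: "lower_central G N c = {\<one>}"
    and q: "Factorial_Ring.prime q"
  shows "\<exists>P. subgroup P G \<and> P \<subseteq> N \<and> card P = q ^ multiplicity q (card N) \<and> conjc N P"
proof -
  interpret NN: group "G\<lparr>carrier := N\<rparr>" using N by (rule subgroup.subgroup_is_group) (rule is_group)
  define a where "a = multiplicity q (card N)"
  have cN: "card N > 0" using fin subgroup.one_closed[OF N] card_gt_0_iff by blast
  have ord: "order (G\<lparr>carrier := N\<rparr>) = q ^ a * (card N div q ^ a)"
    unfolding a_def order_def by (simp add: multiplicity_dvd)
  obtain P where P0: "subgroup P (G\<lparr>carrier := N\<rparr>)" and cP: "card P = q ^ a"
    using sylow_thm[OF q NN.is_group ord] fin by auto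
  have P: "subgroup P G" using incl_subgroup[OF N P0] .
  have PN: "P \<subseteq> N" using subgroup.subset[OF P0] by simp
  have PG: "P \<subseteq> carrier G" using subgroup.subset[OF P] .
  have NsG: "N \<subseteq> carrier G" using subgroup.subset[OF N] .
  define cj where "cj g y = g \<otimes> y \<otimes> inv g" for g y
  define M where "M = {g \<in> N. cj g ` P = P}"
  have img_comp: "cj (g \<otimes> h) ` P = cj g ` (cj h ` P)" if "g \<in> carrier G" "h \<in> carrier G" for g h
    using that PG conj_comp unfolding cj_def image_image by (intro image_cong) auto
  have img_inv: "cj (inv g) ` (cj g ` P) = P" if "g \<in> carrier G" for g
    using that PG conj_inv_cancel unfolding cj_def image_image by (simp add: subset_eq)
  have img_one: "cj \<one> ` P = P" using PG unfolding cj_def by (simp add: subset_eq)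
  have MN: "M \<subseteq> N" unfolding M_def by auto
  have M: "subgroup M G"
  proof (rule subgroup.intro)
    show "M \<subseteq> carrier G" using MN NsG by auto
    show "\<one> \<in> M" unfolding M_def using img_one subgroup.one_closed[OF N] by auto
    fix x y assume x: "x \<in> M" and y: "y \<in> M"
    then have xc: "x \<in> carrier G" "y \<in> carrier G" using MN NsG by auto
    show "x \<otimes> y \<in> M" using x y xc img_comp subgroup.m_closed[OF N] unfolding M_def by auto
  next
    fix x assume x: "x \<in> M"
    then have xc: "x \<in> carrier G" using MN NsG by auto
    have "cj (inv x) ` P = P" using img_inv[OF xc] x unfolding M_def by simp
    then show "inv x \<in> M" using x subgroup.m_inv_closed[OF N] unfolding M_def by auto
  qed
  have cjP: "cj g y \<in> P" if "g \<in> P" "y \<in> P" for g y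
    using that subgroup.m_closed[OF P] subgroup.m_inv_closed[OF P] unfolding cj_def by auto
  have PM: "P \<subseteq> M"
  proof
    fix g assume g: "g \<in> P"
    have "cj g ` P = P"
    proof
      show "cj g ` P \<subseteq> P" using cjP g by auto
      show "P \<subseteq> cj g ` P"
      proof
        fix y assume y: "y \<in> P"
        have "y = cj g (cj (inv g) y)" using conj_inv_cancel2[of g y] g y PG unfolding cj_def by (metis subsetD)
        moreover have "cj (inv g) y \<in> P" using cjP y g subgroup.m_inv_closed[OF P] by auto
        ultimately show "y \<in> cj g ` P" by blast
      qed
    qed
    then show "g \<in> M" using g PN unfolding M_def by auto
  qed
  show ?thesis
  proof (cases "M = N")
    case True
    have "conjc N P" unfolding conjc_def
    proof (intro ballI)
      fix g x assume "g \<in> N" "x \<in> P"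
      then have "cj g x \<in> cj g ` P" by blast
      then show "g \<otimes> x \<otimes> inv g \<in> P" using \<open>g \<in> N\<close> True unfolding M_def cj_def by auto
    qed
    then show ?thesis using P PN cP a_def by auto
  next
    case False
    obtain z where zN: "z \<in> N" and zM: "z \<notin> M" and zn: "\<forall>l\<in>M. z \<otimes> l \<otimes> inv z \<in> M"
      using NG[OF N nil M MN False] by blast
    have zc: "z \<in> carrier G" using zN NsG by auto
    have finM: "finite M" using MN fin finite_subset by auto
    have ccM: "conjc M P" unfolding conjc_def
    proof (intro ballI)
      fix g x assume "g \<in> M" "x \<in> P"
      then have "cj g x \<in> cj g ` P" by blast
      then show "g \<otimes> x \<otimes> inv g \<in> P" using \<open>g \<in> M\<close> unfolding M_def cj_def by auto
    qed
    have dPM: "card P dvd card M" using card_dvd_sub[OF P M PM finM] .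
    have dMN: "card M dvd card N" using card_dvd_sub[OF M N MN fin] .
    have cop: "coprime (card P) (card M div card P)"
      using num1[OF q cN dvd_trans[OF dMN] ] dPM dMN cP unfolding a_def by (metis dvd_refl)
    have sub: "cj z ` P \<subseteq> P"
    proof
      fix x assume "x \<in> cj z ` P"
      then obtain y where y: "y \<in> P" and xy: "x = cj z y" by auto
      have xM: "x \<in> M" using zn y PM xy unfolding cj_def by auto
      have "x [^] card P = z \<otimes> y [^] card P \<otimes> inv z"
        using xy conj_pow zc y PG unfolding cj_def by auto
      also have "\<dots> = \<one>" using pow_card_sub[OF P _ y] finite_subset[OF PN fin] zc by simp
      finally show "x \<in> P" using GL[OF M finM P PM ccM xM _ cop] by simp
    qed
    have "inj_on (cj z) P"
      using zc PG conj_inv_cancel unfolding cj_def inj_on_def by (metis subsetD)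
    then have "card (cj z ` P) = card P" by (rule card_image)
    then have "cj z ` P = P" using sub fin PN finite_subset card_subset_eq by metis
    then have "z \<in> M" using zN unfolding M_def by auto
    then show ?thesis using zM by blast
  qed
qed

definition psub :: "'a set \<Rightarrow> nat \<Rightarrow> 'a set" where
  "psub N d = {x \<in> N. x [^] d = \<one>}"

lemma psub_conjc:
  assumes N: "subgroup N G"
  shows "conjc N (psub N d)"
  unfolding conjc_def psub_def
proof (intro ballI)
  fix g x assume g: "g \<in> N" and x: "x \<in> {x \<in> N. x [^] d = \<one>}"
  have gc: "g \<in> carrier G" and xc: "x \<in> carrier G" using g x subgroup.subset[OF N] by auto
  have "g \<otimes> x \<otimes> inv g \<in> N" using g x subgroup.m_closed[OF N] subgroup.m_inv_closed[OF N] by auto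
  moreover have "(g \<otimes> x \<otimes> inv g) [^] d = \<one>" using conj_pow[OF gc xc] x gc by simp
  ultimately show "g \<otimes> x \<otimes> inv g \<in> {x \<in> N. x [^] d = \<one>}" by simp
qed

lemma prod_subgroup:
  assumes N: "subgroup N G" and A: "subgroup A G" "A \<subseteq> N" and P: "subgroup P G" "P \<subseteq> N"
    and cA: "conjc N A" and cP: "conjc N P"
  shows "subgroup (A <#> P) G" "conjc N (A <#> P)"
proof -
  have AG: "A \<subseteq> carrier G" and PG: "P \<subseteq> carrier G" using subgroup.subset[OF A(1)] subgroup.subset[OF P(1)] by auto
  have NG: "N \<subseteq> carrier G" using N subgroup.subset by auto
  show "subgroup (A <#> P) G"
  proof (rule subgroup.intro)
    show "A <#> P \<subseteq> carrier G" using AG PG by (auto simp: set_mult_def)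
    show "\<one> \<in> A <#> P" unfolding set_mult_def
      using subgroup.one_closed[OF A(1)] subgroup.one_closed[OF P(1)] by force
    fix x y assume "x \<in> A <#> P" "y \<in> A <#> P"
    then obtain a1 p1 a2 p2 where a1: "a1 \<in> A" and p1: "p1 \<in> P" and a2: "a2 \<in> A" and p2: "p2 \<in> P"
      and x: "x = a1 \<otimes> p1" and y: "y = a2 \<otimes> p2" unfolding set_mult_def by auto
    have c: "a1 \<in> carrier G" "p1 \<in> carrier G" "a2 \<in> carrier G" "p2 \<in> carrier G"
      using a1 p1 a2 p2 AG PG by auto
    have ia2: "inv a2 \<in> N" using a2 A(2) subgroup.m_inv_closed[OF N] by auto
    have "inv a2 \<otimes> p1 \<otimes> inv (inv a2) \<in> P" using cP ia2 p1 unfolding conjc_def by blast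
    then have pp: "inv a2 \<otimes> p1 \<otimes> a2 \<otimes> p2 \<in> P" using c p2 subgroup.m_closed[OF P(1)] by simp
    have "x \<otimes> y = (a1 \<otimes> a2) \<otimes> (inv a2 \<otimes> p1 \<otimes> a2 \<otimes> p2)"
      using c x y by (simp add: m_assoc) (simp add: m_assoc[symmetric])
    then show "x \<otimes> y \<in> A <#> P" unfolding set_mult_def
      using pp subgroup.m_closed[OF A(1) a1 a2] by blast
  next
    fix x assume "x \<in> A <#> P"
    then obtain a1 p1 where a1: "a1 \<in> A" and p1: "p1 \<in> P" and x: "x = a1 \<otimes> p1"
      unfolding set_mult_def by auto
    have c: "a1 \<in> carrier G" "p1 \<in> carrier G" using a1 p1 AG PG by auto
    have ia: "inv a1 \<in> N" "inv a1 \<in> A" using a1 A subgroup.m_inv_closed[OF N] subgroup.m_inv_closed[OF A(1)] by auto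
    have "a1 \<otimes> inv p1 \<otimes> inv a1 \<in> P"
      using cP a1 A(2) subgroup.m_inv_closed[OF P(1) p1] unfolding conjc_def by blast
    moreover have "inv x = inv a1 \<otimes> (a1 \<otimes> inv p1 \<otimes> inv a1)"
      using c x by (simp add: m_assoc inv_mult_group) (simp add: m_assoc[symmetric])
    ultimately show "inv x \<in> A <#> P" unfolding set_mult_def using ia by blast
  qed
  show "conjc N (A <#> P)" unfolding conjc_def
  proof (intro ballI)
    fix g x assume g: "g \<in> N" and "x \<in> A <#> P"
    then obtain a1 p1 where a1: "a1 \<in> A" and p1: "p1 \<in> P" and x: "x = a1 \<otimes> p1"
      unfolding set_mult_def by auto
    have c: "a1 \<in> carrier G" "p1 \<in> carrier G" "g \<in> carrier G" using a1 p1 g AG PG NG by auto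
    have "g \<otimes> x \<otimes> inv g = (g \<otimes> a1 \<otimes> inv g) \<otimes> (g \<otimes> p1 \<otimes> inv g)"
      using c x by (simp add: m_assoc) (simp add: m_assoc[symmetric])
    moreover have "g \<otimes> a1 \<otimes> inv g \<in> A" "g \<otimes> p1 \<otimes> inv g \<in> P"
      using cA cP g a1 p1 unfolding conjc_def by auto
    ultimately show "g \<otimes> x \<otimes> inv g \<in> A <#> P" unfolding set_mult_def by blast
  qed
qed

lemma PS:
  assumes N: "subgroup N G" and fin: "finite N" and nil: "lower_central G N c = {\<one>}"
  shows "d dvd card N \<Longrightarrow> coprime d (card N div d) \<Longrightarrow>
         subgroup (psub N d) G \<and> card (psub N d) = d"
proof (induction d rule: less_induct)
  case (less d)
  have cN: "card N > 0" using fin subgroup.one_closed[OF N] card_gt_0_iff by blast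
  have NG: "N \<subseteq> carrier G" using subgroup.subset[OF N] .
  show ?case
  proof (cases "d = 1")
    case True
    have "psub N d = {\<one>}" unfolding psub_def True
      using NG subgroup.one_closed[OF N] by auto
    then show ?thesis using triv_subgroup True by simp
  next
    case False
    then obtain q where q: "Factorial_Ring.prime q" "q dvd d" using prime_factor_nat by blast
    define a where "a = multiplicity q (card N)"
    define d0 where "d0 = d div q ^ a"
    note nums = numPS[OF q less.prems(1) cN less.prems(2), folded a_def, folded d0_def]
    have IH: "subgroup (psub N d0) G \<and> card (psub N d0) = d0"
      using less.IH[OF nums(2) nums(3) nums(4)] .
    define A where "A = psub N d0"
    have A: "subgroup A G" "A \<subseteq> N" "card A = d0" "conjc N A"
      using IH psub_conjc[OF N] unfolding A_def psub_def by auto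
    obtain P where P: "subgroup P G" "P \<subseteq> N" "card P = q ^ a" "conjc N P"
      using SN[OF N fin nil q(1)] unfolding a_def by blast
    define T where "T = A <#> P"
    have T: "subgroup T G" "conjc N T" using prod_subgroup[OF N A(1,2) P(1,2) A(4) P(4)]
      unfolding T_def by auto
    have AG: "A \<subseteq> carrier G" and PG: "P \<subseteq> carrier G" using A(2) P(2) NG by auto
    have TN: "T \<subseteq> N" unfolding T_def set_mult_def using A(2) P(2) subgroup.m_closed[OF N] by blast
    have finT: "finite T" using TN fin finite_subset by auto
    have finA: "finite A" "finite P" using A(2) P(2) fin finite_subset by auto
    have "T = (\<lambda>(x, y). x \<otimes> y) ` (A \<times> P)" unfolding T_def set_mult_def by auto
    then have "card T \<le> card (A \<times> P)" using card_image_le finA by (metis finite_cartesian_product)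
    then have le: "card T \<le> d" using A(3) P(3) nums(6) by (simp add: card_cartesian_product)
    have AT: "A \<subseteq> T" unfolding T_def set_mult_def
      using subgroup.one_closed[OF P(1)] AG by force
    have PT: "P \<subseteq> T" unfolding T_def set_mult_def
      using subgroup.one_closed[OF A(1)] PG by force
    have "d0 dvd card T" "q ^ a dvd card T"
      using card_dvd_sub[OF A(1) T(1) AT finT] card_dvd_sub[OF P(1) T(1) PT finT] A(3) P(3) by auto
    then have "d dvd card T" using nums(5,6) by (metis divides_mult)
    moreover have "card T > 0" using finT subgroup.one_closed[OF T(1)] card_gt_0_iff by blast
    ultimately have cT: "card T = d" using le by (meson dvd_imp_le le_antisym)
    have "psub N d = T"
    proof
      show "T \<subseteq> psub N d" unfolding psub_def using TN pow_card_sub[OF T(1) finT] cT by auto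
      show "psub N d \<subseteq> T"
      proof
        fix x assume "x \<in> psub N d"
        then have x: "x \<in> N" "x [^] d = \<one>" unfolding psub_def by auto
        show "x \<in> T" using GL[OF N fin T(1) TN T(2) x] less.prems(2) cT by simp
      qed
    qed
    then show ?thesis using T(1) cT by simp
  qed
qed

lemma core:
  assumes H: "subgroup H G" "finite H" and nN: "N \<lhd> G\<lparr>carrier := H\<rparr>"
    and nil: "lower_central G N c = {\<one>}" and p: "Factorial_Ring.prime p"
  shows "\<exists>K. K \<lhd> G\<lparr>carrier := H\<rparr> \<and> coprime (card K) p \<and> K \<subseteq> N \<and>
             card N \<le> sylow_order p (card H) * card K"
proof -
  interpret HH: group "G\<lparr>carrier := H\<rparr>" using H(1) by (rule subgroup.subgroup_is_group) (rule is_group)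
  have N0: "subgroup N (G\<lparr>carrier := H\<rparr>)" using nN normal_imp_subgroup by blast
  have N: "subgroup N G" using incl_subgroup[OF H(1) N0] .
  have NH: "N \<subseteq> H" using subgroup.subset[OF N0] by simp
  have fin: "finite N" using NH H(2) finite_subset by auto
  have cN: "card N > 0" using fin subgroup.one_closed[OF N] card_gt_0_iff by blast
  define a where "a = multiplicity p (card N)"
  define d where "d = card N div p ^ a"
  have Nd: "card N = p ^ a * d" unfolding d_def a_def by (simp add: multiplicity_dvd)
  have pa: "p ^ a > 0" using p prime_gt_0_nat by simp
  have nd: "\<not> p dvd d" unfolding d_def a_def using cN p by (intro multiplicity_decompose) auto
  have dd: "d dvd card N" using Nd by simp
  have cNd: "card N div d = p ^ a" using Nd cN by (metis nonzero_mult_div_cancel_right mult_is_0 neq0_conv)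
  have cpd: "coprime p d" using nd p by (simp add: prime_imp_coprime)
  then have cdp: "coprime d p" by (simp add: coprime_commute)
  have cop: "coprime d (card N div d)" using cdp cNd by simp
  define K where "K = psub N d"
  have K: "subgroup K G" "card K = d" using PS[OF N fin nil dd cop] unfolding K_def by auto
  have KN: "K \<subseteq> N" unfolding K_def psub_def by auto
  have cK: "conjc N K" using psub_conjc[OF N] unfolding K_def .
  have hN: "g \<otimes> x \<otimes> inv g \<in> N" if "g \<in> H" "x \<in> N" for g x
  proof -
    have "g \<otimes>\<^bsub>G\<lparr>carrier := H\<rparr>\<^esub> x \<otimes>\<^bsub>G\<lparr>carrier := H\<rparr>\<^esub> inv\<^bsub>G\<lparr>carrier := H\<rparr>\<^esub> g \<in> N"
      using nN that unfolding HH.normal_inv_iff by auto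
    then show ?thesis using m_inv_consistent[OF H(1) that(1)] by simp
  qed
  have HG: "H \<subseteq> carrier G" using subgroup.subset[OF H(1)] .
  have cHK: "g \<otimes> x \<otimes> inv g \<in> K" if g: "g \<in> H" and x: "x \<in> K" for g x
  proof -
    have xc: "x \<in> carrier G" "g \<in> carrier G" using x KN NH HG g by auto
    have "x [^] d = \<one>" using x unfolding K_def psub_def by auto
    then have "(g \<otimes> x \<otimes> inv g) [^] d = \<one>" using conj_pow[OF xc(2) xc(1)] xc by simp
    moreover have "g \<otimes> x \<otimes> inv g \<in> N" using hN g x KN by auto
    ultimately show ?thesis unfolding K_def psub_def by auto
  qed
  have KH: "K \<lhd> G\<lparr>carrier := H\<rparr>"
    unfolding HH.normal_inv_iff
  proof
    show "subgroup K (G\<lparr>carrier := H\<rparr>)" using subgroup_incl[OF K(1) H(1)] KN NH by auto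
    show "\<forall>x\<in>carrier (G\<lparr>carrier := H\<rparr>). \<forall>h\<in>K. x \<otimes>\<^bsub>G\<lparr>carrier := H\<rparr>\<^esub> h \<otimes>\<^bsub>G\<lparr>carrier := H\<rparr>\<^esub> inv\<^bsub>G\<lparr>carrier := H\<rparr>\<^esub> x \<in> K"
      using cHK m_inv_consistent[OF H(1)] by simp
  qed
  have "card N dvd card H" using card_dvd_sub[OF N H(1) NH H(2)] .
  moreover have "card H \<noteq> 0" using H subgroup.one_closed card_gt_0_iff by blast
  ultimately have "a \<le> multiplicity p (card H)" unfolding a_def by (rule dvd_imp_multiplicity_le)
  then have "p ^ a \<le> sylow_order p (card H)" unfolding sylow_order_def
    using p prime_gt_1_nat by (metis power_increasing less_imp_le)
  then have "card N \<le> sylow_order p (card H) * card K" using Nd K(2) by simp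
  moreover have "coprime (card K) p" using K(2) cdp by simp
  ultimately show ?thesis using KH KN by blast
qed

lemma lc_mono: "A \<subseteq> B \<Longrightarrow> lower_central G A i \<subseteq> lower_central G B i"
proof (induction i)
  case 0 then show ?case by simp
next
  case (Suc i)
  then show ?case unfolding lower_central.simps comm_subgroup_def
    by (intro mono_generate) blast
qed

lemma lc_one: "subgroup K G \<Longrightarrow> \<one> \<in> lower_central G K i"
  by (cases i) (auto simp: comm_subgroup_def intro: generate.one subgroup.one_closed)

lemma jordan_case:
assumes p: "Factorial_Ring.prime p" and jG: "jordan G"
shows "p_jordan G p"
proof -
  obtain J :: nat where J: "\<forall>H. subgroup H G \<and> finite H \<longrightarrow>
    (\<exists>N. N \<lhd> G\<lparr>carrier := H\<rparr> \<and> abelian_set G N \<and> card H \<le> J * card N)"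
    using jG unfolding jordan_def by blast
  have "\<forall>H. subgroup H G \<and> finite H \<longrightarrow>
    (\<exists>N. N \<lhd> G\<lparr>carrier := H\<rparr> \<and> coprime (card N) p \<and> abelian_set G N \<and>
         card H \<le> J * sylow_order p (card H) ^ 1 * card N)"
  proof (intro allI impI)
    fix H assume H: "subgroup H G \<and> finite H"
    then obtain N where N: "N \<lhd> G\<lparr>carrier := H\<rparr>" "abelian_set G N" "card H \<le> J * card N"
      using J by blast
    have N0: "subgroup N (G\<lparr>carrier := H\<rparr>)" using N(1) normal_imp_subgroup by blast
    have NG: "subgroup N G" using incl_subgroup[OF _ N0] H by blast
    have NsG: "N \<subseteq> carrier G" using subgroup.subset[OF NG] .
    have "{x \<otimes> y \<otimes> inv x \<otimes> inv y | x y. x \<in> N \<and> y \<in> N} \<subseteq> {\<one>}"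
    proof
      fix z assume "z \<in> {x \<otimes> y \<otimes> inv x \<otimes> inv y | x y. x \<in> N \<and> y \<in> N}"
      then obtain x y where xy: "x \<in> N" "y \<in> N" "z = x \<otimes> y \<otimes> inv x \<otimes> inv y" by blast
      have c: "x \<in> carrier G" "y \<in> carrier G" using xy NsG by auto
      have "x \<otimes> y = y \<otimes> x" using N(2) xy unfolding abelian_set_def by blast
      then have "z = y \<otimes> x \<otimes> inv x \<otimes> inv y" using xy by simp
      also have "\<dots> = \<one>" using c by (simp add: m_assoc)
      finally show "z \<in> {\<one>}" by simp
    qed
    then have "lower_central G N 1 \<subseteq> {\<one>}"
      by (simp add: comm_subgroup_def generate_subgroup_incl[OF _ triv_subgroup])
    then have nil: "lower_central G N 1 = {\<one>}" using lc_one[OF NG, of 1] by blast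
    obtain K where K: "K \<lhd> G\<lparr>carrier := H\<rparr>" "coprime (card K) p" "K \<subseteq> N"
      "card N \<le> sylow_order p (card H) * card K"
      using core[OF _ _ N(1) nil p] H by blast
    have "abelian_set G K" using N(2) K(3) unfolding abelian_set_def by blast
    moreover have "card H \<le> J * sylow_order p (card H) ^ 1 * card K"
      using N(3) K(4) by (metis (no_types, lifting) mult.assoc mult_le_mono2 order_trans power_one_right)
    ultimately show "\<exists>N. N \<lhd> G\<lparr>carrier := H\<rparr> \<and> coprime (card N) p \<and> abelian_set G N \<and>
         card H \<le> J * sylow_order p (card H) ^ 1 * card N" using K by blast
  qed
  then show ?thesis unfolding p_jordan_def by blast
qed

lemma nil_case:
assumes p: "Factorial_Ring.prime p" and nG: "nil_jordan G c"
shows "nil_p_jordan G p c"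
proof -
  obtain J :: nat where J: "\<forall>H. subgroup H G \<and> finite H \<longrightarrow>
    (\<exists>N. N \<lhd> G\<lparr>carrier := H\<rparr> \<and> nilpotent_class_le G N c \<and> card H \<le> J * card N)"
    using nG unfolding nil_jordan_def by blast
  have "\<forall>H. subgroup H G \<and> finite H \<longrightarrow>
    (\<exists>N. N \<lhd> G\<lparr>carrier := H\<rparr> \<and> coprime (card N) p \<and> nilpotent_class_le G N c \<and>
         card H \<le> J * sylow_order p (card H) ^ 1 * card N)"
  proof (intro allI impI)
    fix H assume H: "subgroup H G \<and> finite H"
    then obtain N where N: "N \<lhd> G\<lparr>carrier := H\<rparr>" "nilpotent_class_le G N c" "card H \<le> J * card N"
      using J by blast
    have nil: "lower_central G N c = {\<one>}" using N(2) unfolding nilpotent_class_le_def by simp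
    obtain K where K: "K \<lhd> G\<lparr>carrier := H\<rparr>" "coprime (card K) p" "K \<subseteq> N"
      "card N \<le> sylow_order p (card H) * card K"
      using core[OF _ _ N(1) nil p] H by blast
    have K0: "subgroup K (G\<lparr>carrier := H\<rparr>)" using K(1) normal_imp_subgroup by blast
    have KG: "subgroup K G" using incl_subgroup[OF _ K0] H by blast
    have "lower_central G K c = {\<one>}"
      using lc_mono[OF K(3), of c] nil lc_one[OF KG, of c] by blast
    then have "nilpotent_class_le G K c" unfolding nilpotent_class_le_def by simp
    moreover have "card H \<le> J * sylow_order p (card H) ^ 1 * card K"
      using N(3) K(4) by (metis (no_types, lifting) mult.assoc mult_le_mono2 order_trans power_one_right)
    ultimately show "\<exists>N. N \<lhd> G\<lparr>carrier := H\<rparr> \<and> coprime (card N) p \<and> nilpotent_class_le G N c \<and>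
         card H \<le> J * sylow_order p (card H) ^ 1 * card N" using K by blast
  qed
  then show ?thesis unfolding nil_p_jordan_def by blast
qed

end

theorem corollary2p6:
  fixes G :: "('a, 'b) monoid_scheme" and p c :: nat
  assumes "group G" and "Factorial_Ring.prime p"
  shows "(jordan G \<longrightarrow> p_jordan G p) \<and> (nil_jordan G c \<longrightarrow> nil_p_jordan G p c)"
  using group.jordan_case[OF assms(1) assms(2)] group.nil_case[OF assms(1) assms(2)] by blast

end
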